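(* Let $p$ be a prime, let $\alpha,\beta\ge1$ be integers, and let $B$ be a commutative group of exponent $p^\beta$. Then $$\delta(\mathbb{Z}/p^\alpha\mathbb{Z},B)=(\beta(p-1)+1)p^{\alpha-1}-1.$$ Equivalently, the nilpotency index of the augmentation ideal of $(\mathbb{Z}/p^\beta\mathbb{Z})[\mathbb{Z}/p^\alpha\mathbb{Z}]$ is $(\beta(p-1)+1)p^{\alpha-1}$.
   Context: For commutative groups $A,B$, $B^A$ denotes the commutative group (under pointwise addition) of all maps $A\to B$. For $a\in A$, the difference operator $\Delta_a:B^A\to B^A$ is $(\Delta_a f)(x)=f(x+a)-f(x)$. Let $\widetilde{\mathbb N}=\mathbb N\cup\{-\infty,\infty\}$ ($\mathbb N=\{0,1,2,\dots\}$), totally ordered with $-\infty$ least and $\infty$ greatest. The functional degree $\operatorname{fdeg}(f)\in\widetilde{\mathbb N}$ of $f\in B^A$ is: $-\infty$ if $f=0$; otherwise the least $n\in\mathbb N$ such that $\Delta_{a_1}\cdots\Delta_{a_{n+1}}f=0$ for all $a_1,\dots,a_{n+1}\in A$; and $\infty$ if no such $n$ exists. Define $\delta(A,B)=\sup\{\operatorname{fdeg}(f): f\in B^A\}$. For a commutative ring $R$ and group $A$, the augmentation ideal of the group ring $R[A]$ is the kernel of $\sum r_a[a]\mapsto\sum r_a$; the nilpotency index of an ideal $I$ is the least $n\in\mathbb N$ with $I^n=0$, or $\infty$ if none exists. *)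

theory Defs
  imports Main "HOL-Library.Extended_Nat" "HOL-Library.Option_ord" "HOL-Computational_Algebra.Primes"
begin

text \<open>Maps Z/mZ -> B are represented as m-periodic maps int -> B
  (canonical bijection).  The difference operator.\<close>
definition Delta :: "int \<Rightarrow> (int \<Rightarrow> 'b::ab_group_add) \<Rightarrow> (int \<Rightarrow> 'b)" where
  "Delta a f = (\<lambda>x. f (x + a) - f x)"

definition periodic_maps :: "nat \<Rightarrow> (int \<Rightarrow> 'b::ab_group_add) set" where
  "periodic_maps m = {f. \<forall>x. f (x + int m) = f x}"

definition diffs_vanish :: "nat \<Rightarrow> (int \<Rightarrow> 'b::ab_group_add) \<Rightarrow> bool" where
  "diffs_vanish n f \<longleftrightarrow> (\<forall>as::int list. length as = Suc n \<longrightarrow> foldr Delta as f = (\<lambda>_. 0))"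

text \<open>Functional degree in N u {-oo, oo}: None = -oo, Some \<infinity> = oo
  (ordered by Option_ord, None least).\<close>
definition fdeg :: "(int \<Rightarrow> 'b::ab_group_add) \<Rightarrow> enat option" where
  "fdeg f = (if f = (\<lambda>_. 0) then None
             else Some (if \<exists>n. diffs_vanish n f then enat (LEAST n. diffs_vanish n f) else \<infinity>))"

definition delta :: "'b::ab_group_add itself \<Rightarrow> nat \<Rightarrow> enat option" where
  "delta _ m = (SUP f \<in> (periodic_maps m :: (int \<Rightarrow> 'b) set). fdeg f)"

definition nsmul :: "nat \<Rightarrow> 'b::ab_group_add \<Rightarrow> 'b" where
  "nsmul n x = (((+) x) ^^ n) 0"

definition has_exponent :: "'b::ab_group_add itself \<Rightarrow> nat \<Rightarrow> bool" where
  "has_exponent _ e \<longleftrightarrow> e > 0 \<and> (\<forall>x::'b. nsmul e x = 0) \<and>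
     (\<forall>k. k > 0 \<and> (\<forall>x::'b. nsmul k x = 0) \<longrightarrow> e \<le> k)"

end

theory Submission
  imports Defs "HOL-Computational_Algebra.Polynomial" "HOL-Computational_Algebra.Primes"
begin

lemma nsmul_0 [simp]: "nsmul 0 x = 0" by (simp add: nsmul_def)
lemma nsmul_Suc: "nsmul (Suc n) x = x + nsmul n x" by (simp add: nsmul_def)
lemma nsmul_add: "nsmul (m + n) x = nsmul m x + nsmul n x"
  by (induct m) (simp_all add: nsmul_Suc add.assoc)
lemma nsmul_plus: "nsmul n (x + y) = nsmul n x + nsmul n y"
  by (induct n) (simp_all add: nsmul_Suc algebra_simps)
lemma nsmul_zero [simp]: "nsmul n (0::'a::ab_group_add) = 0"
  by (induct n) (simp_all add: nsmul_Suc)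
lemma nsmul_minus: "nsmul n (- x) = - nsmul n (x::'a::ab_group_add)"
  by (induct n) (simp_all add: nsmul_Suc algebra_simps)
lemma nsmul_diff: "nsmul n (x - y) = nsmul n x - nsmul n (y::'a::ab_group_add)"
  using nsmul_plus[of n x "-y"] by (simp add: nsmul_minus)
lemma nsmul_mult: "nsmul (m * n) x = nsmul m (nsmul n (x::'a::ab_group_add))"
  by (induct m) (simp_all add: nsmul_Suc nsmul_add)

definition zsmul :: "int \<Rightarrow> 'b::ab_group_add \<Rightarrow> 'b" where
  "zsmul k x = (if k \<ge> 0 then nsmul (nat k) x else - nsmul (nat (-k)) x)"

lemma zsmul_repr: "zsmul (int a - int b) x = nsmul a x - nsmul b x"
proof (cases "b \<le> a")
  case True
  have 1: "nsmul a x = nsmul (a-b) x + nsmul b x"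
    using nsmul_add[of "a-b" b x] True by simp
  have 2: "int a - int b = int (a - b)" using True by simp
  show ?thesis unfolding 2 1 by (simp add: zsmul_def)
next
  case False
  have 1: "nsmul b x = nsmul (b-a) x + nsmul a x"
    using nsmul_add[of "b-a" a x] False by simp
  have 2: "int a - int b = - int (b - a)" using False by simp
  have 3: "\<not> (0::int) \<le> - int (b - a)" using False by simp
  have 4: "nat (- (- int (b - a))) = b - a" by simp
  show ?thesis unfolding 2 1 zsmul_def using 3 4 by (simp only: if_False) simp
qed

lemma int_repr: "(k::int) = int (nat k) - int (nat (-k))" by simp

lemma zsmul_add: "zsmul (k + l) x = zsmul k x + zsmul l x"
proof -
  have "k + l = int (nat k + nat l) - int (nat (-k) + nat (-l))" by simp
  then have "zsmul (k+l) x = nsmul (nat k + nat l) x - nsmul (nat (-k) + nat (-l)) x"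
    by (simp only: zsmul_repr)
  also have "\<dots> = zsmul k x + zsmul l x"
    using zsmul_repr[of "nat k" "nat (-k)" x] zsmul_repr[of "nat l" "nat (-l)" x]
    by (simp only: int_repr[symmetric] nsmul_add) (simp add: algebra_simps)
  finally show ?thesis .
qed

lemma zsmul_mult: "zsmul (k * l) x = zsmul k (zsmul l x)"
proof -
  define a b c d where "a = nat k" "b = nat (-k)" "c = nat l" "d = nat (-l)"
  have k: "k = int a - int b" and l: "l = int c - int d" by (simp_all add: a_b_c_d_def)
  have "k * l = int (a*c + b*d) - int (a*d + b*c)" unfolding k l by (simp add: algebra_simps)
  then have "zsmul (k*l) x = nsmul (a*c + b*d) x - nsmul (a*d + b*c) x" by (simp only: zsmul_repr)
  also have "\<dots> = zsmul k (zsmul l x)"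
    unfolding k l zsmul_repr nsmul_add nsmul_diff nsmul_mult by (simp add: algebra_simps)
  finally show ?thesis .
qed

lemma zsmul_plus: "zsmul k (x + y) = zsmul k x + zsmul k y"
  by (simp add: zsmul_def nsmul_plus)
lemma zsmul_zero [simp]: "zsmul k 0 = 0" by (simp add: zsmul_def)
lemma zsmul_0' [simp]: "zsmul 0 x = 0" by (simp add: zsmul_def)
lemma zsmul_1 [simp]: "zsmul 1 x = x" by (simp add: zsmul_def nsmul_Suc)
lemma zsmul_m1 [simp]: "zsmul (-1) x = - x" by (simp add: zsmul_def nsmul_Suc)
lemma zsmul_nat: "zsmul (int n) x = nsmul n x" by (simp add: zsmul_def)
lemma zsmul_minus: "zsmul k (- x) = - zsmul k x" by (simp add: zsmul_def nsmul_minus)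
lemma zsmul_diff: "zsmul k (x - y) = zsmul k x - zsmul k y"
  using zsmul_plus[of k x "-y"] by (simp add: zsmul_minus)


definition shift :: "int \<Rightarrow> (int \<Rightarrow> 'b) \<Rightarrow> int \<Rightarrow> 'b" where
  "shift a f = (\<lambda>x. f (x + a))"

definition act :: "int poly \<Rightarrow> (int \<Rightarrow> 'b::ab_group_add) \<Rightarrow> (int \<Rightarrow> 'b)" where
  "act q = fold_coeffs (\<lambda>c G f. (\<lambda>x. zsmul c (f x) + G (shift 1 f) x)) q (\<lambda>f. (\<lambda>_. 0))"

lemma act_0 [simp]: "act 0 f = (\<lambda>_. 0)"
  by (simp add: act_def)

lemma act_pCons: "act (pCons c q) f = (\<lambda>x. zsmul c (f x) + act q (shift 1 f) x)"
proof (cases "q = 0 \<and> c = 0")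
  case True
  then show ?thesis by simp
next
  case False
  then show ?thesis
    by (cases "c = 0") (auto simp: act_def)
qed

lemma act_zero_fun [simp]: "act q (\<lambda>_. 0) = (\<lambda>_. 0)"
proof (induct q)
  case 0 then show ?case by simp
next
  case (pCons a q) then show ?case by (simp add: act_pCons shift_def)
qed

lemma act_add_fun: "act q (\<lambda>x. f x + g x) = (\<lambda>x. act q f x + act q g x)"
proof (induct q arbitrary: f g)
  case 0 then show ?case by simp
next
  case (pCons a q)
  have "shift 1 (\<lambda>x. f x + g x) = (\<lambda>x. shift 1 f x + shift 1 g x)" by (simp add: shift_def)
  then show ?case using pCons by (simp add: act_pCons zsmul_plus algebra_simps)
qed

lemma act_zsmul_fun: "act q (\<lambda>x. zsmul k (f x)) = (\<lambda>x. zsmul k (act q f x))"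
proof (induct q arbitrary: f)
  case 0 then show ?case by simp
next
  case (pCons a q)
  have "shift 1 (\<lambda>x. zsmul k (f x)) = (\<lambda>x. zsmul k (shift 1 f x))" by (simp add: shift_def)
  then show ?case using pCons
    by (simp add: act_pCons zsmul_plus zsmul_mult[symmetric] mult.commute)
qed

lemma act_minus_fun: "act q (\<lambda>x. - f x) = (\<lambda>x. - act q f x)"
  using act_zsmul_fun[of q "-1" f] by simp

lemma act_diff_fun: "act q (\<lambda>x. f x - g x) = (\<lambda>x. act q f x - act q g x)"
  using act_add_fun[of q f "\<lambda>x. - g x"] by (simp add: act_minus_fun)

lemma act_shift: "act q (shift a f) = shift a (act q f)"
proof (induct q arbitrary: f)
  case 0 then show ?case by (simp add: shift_def)
next
  case (pCons c q)
  have comm: "shift 1 (shift a f) = shift a (shift 1 f)" by (simp add: shift_def algebra_simps)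
  have "act (pCons c q) (shift a f) = (\<lambda>x. zsmul c (shift a f x) + act q (shift a (shift 1 f)) x)"
    by (simp add: act_pCons comm)
  also have "\<dots> = (\<lambda>x. zsmul c (shift a f x) + shift a (act q (shift 1 f)) x)"
    by (simp only: pCons(2))
  also have "\<dots> = shift a (act (pCons c q) f)" by (simp add: act_pCons shift_def)
  finally show ?case .
qed

lemma act_add: "act (q + r) f = (\<lambda>x. act q f x + act r f x)"
proof (induct q arbitrary: r f)
  case 0 then show ?case by simp
next
  case (pCons a q)
  obtain b r' where r: "r = pCons b r'" by (cases r) auto
  have IH: "act (q + r') (shift 1 f) = (\<lambda>x. act q (shift 1 f) x + act r' (shift 1 f) x)"
    by (rule pCons(2))
  show ?case unfolding r add_pCons act_pCons IH
    by (simp add: zsmul_add add_ac)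
qed

lemma act_smult: "act (smult k q) f = (\<lambda>x. zsmul k (act q f x))"
proof (induct q arbitrary: f)
  case 0 then show ?case by simp
next
  case (pCons a q)
  then show ?case by (simp add: act_pCons zsmul_mult zsmul_plus)
qed

lemma act_pCons0: "act (pCons 0 q) f = act q (shift 1 f)"
  by (simp add: act_pCons)

lemma act_mult: "act (q * r) f = act q (act r f)"
proof (induct q arbitrary: f)
  case 0 then show ?case by simp
next
  case (pCons a q)
  have "act (pCons a q * r) f = (\<lambda>x. zsmul a (act r f x) + act (q * r) (shift 1 f) x)"
    by (simp add: act_add act_smult act_pCons0)
  also have "\<dots> = act (pCons a q) (act r f)"
    using pCons by (simp add: act_pCons act_shift)
  finally show ?case .
qed

lemma act_1 [simp]: "act 1 f = f"
  by (simp add: one_pCons act_pCons)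

lemma act_const: "act [:c:] f = (\<lambda>x. zsmul c (f x))"
  by (simp add: act_pCons)

lemma act_monom: "act (monom 1 n) f = shift (int n) f"
proof (induct n arbitrary: f)
  case 0 then show ?case by (simp add: monom_0 act_const shift_def)
next
  case (Suc n)
  then show ?case by (simp add: monom_Suc act_pCons0 shift_def algebra_simps)
qed

lemma act_diff: "act (q - r) f = (\<lambda>x. act q f x - act r f x)"
proof -
  have e: "q - r = q + smult (-1) r" by simp
  show ?thesis by (simp only: e act_add act_smult zsmul_m1) simp
qed

lemma act_x: "act [:-1,1:] f = Delta 1 f"
  by (simp add: act_pCons Delta_def shift_def)


lemma binom_p:
  fixes a P c :: "'a::comm_ring_1"
  shows "\<exists>R. (a + P*c)^n = a^n + of_nat n * P * a^(n-1) * c + P^2 * c * R"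
proof (induct n)
  case 0 show ?case by (rule exI[of _ 0]) simp
next
  case (Suc n)
  then obtain R where R: "(a + P*c)^n = a^n + of_nat n * P * a^(n-1) * c + P^2 * c * R" by blast
  show ?case
  proof (cases n)
    case 0 then show ?thesis by (intro exI[of _ 0]) simp
  next
    case (Suc k)
    have key: "(a + P*c) * (a*b + K*P*b*c + P^2*c*R) = a*(a*b) + (K+1)*P*(a*b)*c + P^2*c*(K*b*c + R*a + P*c*R)"
      for b K by (simp add: algebra_simps power2_eq_square)
    have e1: "a^n = a * a^k" and e2: "a^(n-1) = a^k" and e3: "a^(Suc n) = a*(a*a^k)"
      and e4: "a^(Suc n - 1) = a * a^k" and e5: "(of_nat (Suc n)::'a) = of_nat n + 1"
      using Suc by simp_all
    have "(a + P*c)^(Suc n) = (a + P*c) * (a^n + of_nat n * P * a^(n-1) * c + P^2 * c * R)"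
      by (simp only: power_Suc R)
    also have "\<dots> = a^(Suc n) + of_nat (Suc n) * P * a^(Suc n - 1) * c
       + P^2 * c * (of_nat n * a^k * c + R * a + P * c * R)"
      unfolding e1 e2 e3 e4 e5 key by (rule refl)
    finally show ?thesis by (rule exI)
  qed
qed

lemma binom_pp:
  fixes a c :: "'a::comm_ring_1"
  shows "\<exists>R. (a + of_nat p * c)^p = a^p + (of_nat p)^2 * c * R"
proof -
  obtain R where R: "(a + of_nat p * c)^p = a^p + of_nat p * of_nat p * a^(p-1) * c + (of_nat p)^2 * c * R"
    using binom_p[of a "of_nat p" c p] by blast
  have "(a + of_nat p * c)^p = a^p + (of_nat p)^2 * c * (a^(p-1) + R)"
    unfolding R by (simp add: algebra_simps power2_eq_square)
  then show ?thesis by blast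
qed

lemma pcompose_power: "pcompose (q ^ n) r = (pcompose q r) ^ n"
  by (induct n) (simp_all add: pcompose_mult pcompose_1)

lemma pcompose_X: "pcompose [:0,1:] (r::int poly) = r"
  by (simp add: pcompose_pCons one_pCons)

lemma cancel_content:
  fixes g D :: "int poly"
  assumes "content g = 1" "g dvd [:c:] * D" "c \<noteq> 0"
  shows "g dvd D"
proof -
  obtain Q where Q: "[:c:] * D = g * Q" using assms(2) by blast
  have "content ([:c:] * D) = content Q" unfolding Q content_mult using assms(1) by simp
  then have cq: "content Q = \<bar>c\<bar> * content D" by (simp add: content_mult)
  have "c dvd \<bar>c\<bar> * content D" by simp
  then have "c dvd content Q" unfolding cq .
  then have "[:c:] dvd Q" by (simp add: const_poly_dvd_iff_dvd_content)
  then obtain Q' where Q': "Q = [:c:] * Q'" by blast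
  have "[:c:] * D = [:c:] * (g * Q')" unfolding Q Q' by (simp add: algebra_simps)
  then have "D = g * Q'" using assms(3) by (simp add: smult_cancel)
  then show ?thesis by (rule dvdI)
qed

lemma content_coeff0:
  fixes g :: "int poly"
  assumes "coeff g 0 = 1 \<or> coeff g 0 = -1"
  shows "content g = 1"
proof -
  have "content g dvd coeff g 0" by simp
  then have "content g dvd 1" using assms by (metis dvd_minus_iff)
  then have "is_unit (content g)" by simp
  then show ?thesis by (simp only: is_unit_content_iff)
qed


lemma S_mult: "[:0,1:] * (\<Sum>i<p. [:1::int,1:]^i) = [:1,1:]^p - 1"
proof -
  have h: "1 - [:1::int,1:]^p = (1 - [:1,1:]) * (\<Sum>i<p. [:1,1:]^i)" by (rule one_diff_power_eq)
  have e: "(1 - [:1::int,1:]) = - [:0,1:]" by (simp add: one_pCons)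
  have "1 - [:1::int,1:]^p = - ([:0,1:] * (\<Sum>i<p. [:1,1:]^i))" unfolding h e by simp
  then show ?thesis by (metis minus_diff_eq minus_minus)
qed

lemma coeff_lin_pow: "coeff ([:1::int,1:]^p) j = int (p choose j)"
proof (cases "j \<le> p")
  case True then show ?thesis by (simp add: coeff_linear_poly_power)
next
  case False
  have "degree ([:1::int,1:]^p) \<le> p"
    using degree_power_le[of "[:1::int,1:]" p] by simp
  then show ?thesis using False by (simp add: coeff_eq_0 binomial_eq_0)
qed

lemma S_coeff: "coeff (\<Sum>i<p. [:1::int,1:]^i) j = int (p choose Suc j)"
proof -
  have "coeff (\<Sum>i<p. [:1::int,1:]^i) j = coeff ([:0,1:] * (\<Sum>i<p. [:1::int,1:]^i)) (Suc j)"
    by simp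
  also have "\<dots> = coeff ([:1,1:]^p - 1) (Suc j)" unfolding S_mult ..
  also have "\<dots> = int (p choose Suc j)" by (simp add: coeff_lin_pow)
  finally show ?thesis .
qed

lemma X_pow_monom: "([:0,1:]::int poly)^n = monom 1 n"
  by (simp add: monom_altdef)

lemma Phi_poly:
  assumes "prime p"
  shows "\<exists>d0. (\<Sum>i<p. [:1::int,1:]^i) = [:0,1:]^(p-1) + [:int p:] * (1 + [:0,1:] * d0)"
proof -
  define S where "S = (\<Sum>i<p. [:1::int,1:]^i)"
  define E where "E = S - [:0,1:]^(p-1) - [:int p:]"
  have p2: "p \<ge> 2" using assms prime_ge_2_nat by blast
  have cE: "coeff E j = int (p choose Suc j) - (if p - 1 = j then 1 else 0) - (if j = 0 then int p else 0)" for j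
    unfolding E_def S_def by (simp add: S_coeff X_pow_monom coeff_pCons split: nat.split)
  have E0: "coeff E 0 = 0" using p2 by (simp add: cE)
  have Edvd: "int p dvd coeff E j" for j
  proof (cases "j = 0")
    case True then show ?thesis using E0 by simp
  next
    case False
    show ?thesis
    proof (cases "j = p - 1")
      case True then show ?thesis using False p2 by (simp add: cE)
    next
      case False2: False
      show ?thesis
      proof (cases "Suc j < p")
        case True
        then have "p dvd (p choose Suc j)" using dvd_choose_prime[of "Suc j" p] assms p2 by simp
        then show ?thesis using False False2 by (simp add: cE)
      next
        case False3: False
        then have "p choose Suc j = 0" using False2 p2 by (simp add: binomial_eq_0)
        then show ?thesis using False False2 by (simp only: cE) simp
      qed
    qed
  qed
  obtain e E' where EE: "E = pCons e E'" by (cases E) auto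
  have "e = 0" using E0 EE by simp
  have "[:int p:] dvd E'"
    unfolding const_poly_dvd_iff using Edvd EE by (metis coeff_pCons_Suc)
  then obtain d0 where d0: "E' = [:int p:] * d0" by blast
  have "S = [:0,1:]^(p-1) + [:int p:] * (1 + [:0,1:] * d0)"
  proof -
    have "S = [:0,1:]^(p-1) + [:int p:] + E" unfolding E_def by simp
    also have "E = [:0,1:] * ([:int p:] * d0)" using EE \<open>e = 0\<close> d0 by simp
    finally show ?thesis by (simp add: algebra_simps)
  qed
  then show ?thesis unfolding S_def by blast
qed

lemma Phi:
  fixes y :: "int poly"
  assumes "prime p" "coeff y 0 = -1"
  shows "\<exists>Phi d. y * Phi = (1+y)^p - 1 \<and> Phi = y^(p-1) + [:int p:]*(1 + y*d) \<and> coeff Phi 0 = 1"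
proof -
  define S where "S = (\<Sum>i<p. [:1::int,1:]^i)"
  obtain d0 where d0: "S = [:0,1:]^(p-1) + [:int p:] * (1 + [:0,1:] * d0)"
    using Phi_poly[OF assms(1)] unfolding S_def by blast
  have p1: "p \<ge> 1" using assms(1) prime_ge_1_nat by blast
  define Phi where "Phi = pcompose S y"
  have l1: "pcompose [:1,1:] y = 1 + y" by (simp add: pcompose_pCons one_pCons)
  have "y * Phi = pcompose ([:0,1:] * S) y" unfolding Phi_def by (simp only: pcompose_mult pcompose_X)
  also have "\<dots> = (1+y)^p - 1" unfolding S_def S_mult by (simp add: pcompose_diff pcompose_power l1 pcompose_1)
  finally have r1: "y * Phi = (1+y)^p - 1" .
  have r2: "Phi = y^(p-1) + [:int p:]*(1 + y * pcompose d0 y)"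
    unfolding Phi_def d0 by (simp only: pcompose_add pcompose_mult pcompose_power pcompose_X pcompose_1 pcompose_const)
  have "coeff Phi 0 = poly Phi 0" by (simp add: poly_0_coeff_0)
  also have "\<dots> = poly S (-1)" unfolding Phi_def poly_pcompose using assms(2) by (simp add: poly_0_coeff_0)
  also have "\<dots> = (\<Sum>i<p. (0::int)^i)" unfolding S_def by (simp add: poly_sum)
  also have "\<dots> = 1" using p1 by (simp add: power_0_left)
  finally have r3: "coeff Phi 0 = 1" .
  show ?thesis using r1 r2 r3 by blast
qed

definition XX :: "int poly" where "XX = [:-1,1:]"
definition TT :: "int poly" where "TT = [:0,1:]"

lemma TT_XX: "TT = XX + 1" by (simp add: XX_def TT_def one_pCons)

lemma XX_dvd: "XX dvd (TT^n - 1)"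
proof -
  have "poly (TT^n - 1) 1 = 0" by (simp add: TT_def)
  from this[unfolded poly_eq_0_iff_dvd] show ?thesis unfolding XX_def by simp
qed

lemma coeff_TT_1: "m \<ge> 1 \<Longrightarrow> coeff (TT^m - 1) 0 = -1"
  by (simp add: TT_def X_pow_monom)

lemma of_nat_intpoly: "(of_nat n :: int poly) = [:int n:]"
  by (simp add: of_nat_poly)

lemma F1:
  assumes "prime p"
  shows "\<exists>h. XX^(p^k) = (TT^(p^k) - 1) + [:int p:] * XX * h"
proof (induct k)
  case 0 show ?case by (rule exI[of _ 0]) (simp add: TT_XX)
next
  case (Suc k)
  then obtain h where h: "XX^(p^k) = (TT^(p^k) - 1) + [:int p:] * XX * h" by blast
  define y where "y = TT^(p^k) - 1"
  have "p > 0" using prime_gt_0_nat[OF assms] .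
  then have py: "p^k \<ge> 1" by simp
  obtain Phi d where Phi: "y * Phi = (1+y)^p - 1" "Phi = y^(p-1) + [:int p:]*(1 + y*d)"
    using Phi[OF assms coeff_TT_1[OF py]] unfolding y_def by blast
  have p1: "p \<ge> 1" using assms prime_ge_1_nat by blast
  obtain s where s: "y = XX * s" using XX_dvd unfolding y_def by blast
  obtain R where R: "(y + of_nat p * (XX * h))^p = y^p + (of_nat p)^2 * (XX * h) * R"
    using binom_pp by blast
  have yp: "y^p = y * y^(p-1)" using p1 by (simp add: power_eq_if)
  have Y: "(1 + y)^p = TT^(p^Suc k)" unfolding y_def by (simp add: power_mult[symmetric] mult.commute)
  have "XX^(p^Suc k) = (XX^(p^k))^p" by (simp add: power_mult[symmetric] mult.commute)
  also have "\<dots> = (y + of_nat p * (XX * h))^p" unfolding h y_def by (simp add: of_nat_intpoly algebra_simps)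
  also have "\<dots> = y * (Phi - [:int p:]*(1 + y*d)) + (of_nat p)^2 * (XX * h) * R"
    unfolding R yp using Phi(2) by simp
  also have "\<dots> = (TT^(p^Suc k) - 1) + [:int p:] * XX * ([:int p:] * h * R - s * (1 + y*d))"
    using Phi(1) Y s by (simp add: of_nat_intpoly algebra_simps power2_eq_square)
  finally show ?case by blast
qed

lemma Lkey:
  assumes "prime p"
  shows "\<exists>E F G. XX^(p^k*p) = [:int p:]*XX^(p^k)*E + [:int p:]^2*F + (TT^(p^k*p) - 1)*G"
proof -
  define y where "y = TT^(p^k) - 1"
  define P where "P = [:int p:]"
  obtain h where h: "XX^(p^k) = y + P * XX * h" using F1[OF assms, of k] unfolding y_def P_def by blast
  have "p > 0" using prime_gt_0_nat[OF assms] .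
  then have py: "p^k \<ge> 1" by simp
  obtain Phi d where Phi: "y * Phi = (1+y)^p - 1" "Phi = y^(p-1) + P*(1 + y*d)"
    using Phi[OF assms coeff_TT_1[OF py]] unfolding y_def P_def by blast
  have p1: "p \<ge> 1" using assms prime_ge_1_nat by blast
  obtain R where R: "(y + of_nat p * (XX * h))^p = y^p + (of_nat p)^2 * (XX * h) * R"
    using binom_pp by blast
  have yp: "y^p = y * y^(p-1)" using p1 by (simp add: power_eq_if)
  have Y: "(1 + y)^p = TT^(p^k*p)" unfolding y_def by (simp add: power_mult)
  have yy: "y = XX^(p^k) - P * XX * h" using h by simp
  have "XX^(p^k*p) = (XX^(p^k))^p" by (simp add: power_mult)
  also have "\<dots> = (y + of_nat p * (XX * h))^p" unfolding h P_def by (simp add: of_nat_intpoly algebra_simps)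
  also have "\<dots> = y * (Phi - P*(1 + y*d)) + P^2 * (XX * h) * R"
    unfolding R yp using Phi(2) by (simp add: of_nat_intpoly P_def)
  also have "\<dots> = (y * Phi) - P * y * (1 + y*d) + P^2 * (XX * h) * R"
    by (simp add: algebra_simps)
  also have "\<dots> = (TT^(p^k*p) - 1) - P * (XX^(p^k) - P * XX * h) * (1 + y*d) + P^2 * (XX * h) * R"
    unfolding Phi(1) Y by (simp add: yy[symmetric])
  also have "\<dots> = P*XX^(p^k)*(-(1 + y*d)) + P^2*(XX*h*(1+y*d) + XX*h*R) + (TT^(p^k*p) - 1)*1"
    by (simp add: algebra_simps power2_eq_square)
  finally show ?thesis unfolding P_def by blast
qed

lemma UB:
  assumes "prime p"
  shows "\<exists>E F G. XX^(p^k + g*(p^k*(p-1))) = [:int p:]^g * XX^(p^k)*E + [:int p:]^(g+1)*F + (TT^(p^k*p) - 1)*G"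
proof (induct g)
  case 0 show ?case by (rule exI[of _ 1], rule exI[of _ 0], rule exI[of _ 0]) simp
next
  case (Suc g)
  define m where "m = p^k"
  define P where "P = [:int p:]"
  define Y where "Y = TT^(p^k*p) - 1"
  obtain E F G where EFG: "XX^(m + g*(m*(p-1))) = P^g * XX^m*E + P^(g+1)*F + Y*G"
    using Suc unfolding m_def P_def Y_def by blast
  obtain E' F' G' where L: "XX^(m*p) = P*XX^m*E' + P^2*F' + Y*G'"
    using Lkey[OF assms, of k] unfolding m_def P_def Y_def by blast
  have p2: "p \<ge> 2" using assms prime_ge_2_nat by blast
  obtain q where q: "p = q + 2" using p2 by (metis le_add_diff_inverse2)
  have e1: "m + Suc g * (m * (p-1)) = m*(p-1) + (m + g*(m*(p-1)))" by (simp add: q algebra_simps)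
  have e2: "m*p = m + m*(p-1)" by (simp add: q algebra_simps)
  have e3: "m*(p-1) = m + m*(p-2)" by (simp add: q algebra_simps)
  have X3: "XX^(m*(p-1)) = XX^m * XX^(m*(p-2))" using e3 by (simp add: power_add)
  have X2: "XX^(m*(p-1)) * XX^m = XX^(m*p)" using e2 by (simp add: power_add mult.commute)
  have "XX^(m + Suc g * (m * (p-1))) = XX^(m*(p-1)) * (P^g * XX^m*E + P^(g+1)*F + Y*G)"
    unfolding e1 power_add[of XX "m*(p-1)" "m + g*(m*(p-1))"] EFG ..
  also have "\<dots> = P^g * (XX^(m*(p-1)) * XX^m) * E + P^(g+1) * XX^(m*(p-1)) * F + Y * (XX^(m*(p-1)) * G)"
    by (simp add: algebra_simps)
  also have "\<dots> = P^g * (P*XX^m*E' + P^2*F' + Y*G') * E + P^(g+1) * XX^(m*(p-1)) * F + Y * (XX^(m*(p-1)) * G)"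
    unfolding X2 L ..
  also have "\<dots> = P^(Suc g) * XX^m * (E' * E + XX^(m*(p-2)) * F) + P^(Suc g + 1) * (F' * E) + Y * (P^g * G' * E + XX^(m*(p-1)) * G)"
    unfolding X3 by (simp add: algebra_simps power2_eq_square)
  finally show ?case unfolding m_def P_def Y_def by blast
qed

lemma UBI:
  assumes "prime p"
  shows "\<exists>A B. XX^((g*(p-1)+1)*p^k) = [:int p:]^g * A + (TT^(p^Suc k) - 1)*B"
proof -
  obtain E F G where EFG: "XX^(p^k + g*(p^k*(p-1))) = [:int p:]^g * XX^(p^k)*E + [:int p:]^(g+1)*F + (TT^(p^k*p) - 1)*G"
    using UB[OF assms] by blast
  have "(g*(p-1)+1)*p^k = p^k + g*(p^k*(p-1))" by (simp add: algebra_simps)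
  moreover have "p^k*p = p^Suc k" by (simp add: mult.commute)
  ultimately have "XX^((g*(p-1)+1)*p^k) = [:int p:]^g * (XX^(p^k)*E + [:int p:]*F) + (TT^(p^Suc k) - 1)*G"
    using EFG by (simp add: algebra_simps)
  then show ?thesis by blast
qed

lemma sum_pow_mod: "\<exists>Z. (a + b)^n = b^n + a * (Z::'a::comm_ring_1)"
proof (induct n)
  case 0 show ?case by (rule exI[of _ 0]) simp
next
  case (Suc n)
  then obtain Z where Z: "(a + b)^n = b^n + a * Z" by blast
  have "(a+b)^Suc n = b^Suc n + a * (b^n + Z * (a + b))" unfolding power_Suc Z by (simp add: algebra_simps)
  then show ?case by blast
qed

lemma const_poly_power: "[:c:]^n = [:(c::int)^n:]"
  by (induct n) (simp_all add: one_pCons)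

lemma pc_XX: "pcompose XX [:1,1:] = [:0,1:]"
  by (simp add: XX_def pcompose_pCons one_pCons)

lemma exp_ineq:
  fixes b p k :: nat
  assumes "b \<ge> 1" "p \<ge> 2" "k \<ge> 1"
  shows "((b+1)*(p-1)+1)*p^(k-1) \<le> (b*(p-1)+1)*p^k - 1"
proof -
  obtain q where q: "p = q + 2" using assms(2) by (metis le_add_diff_inverse2)
  define t where "t = p^(k-1)"
  have pk: "p^k = p * t" unfolding t_def using assms(3) by (cases k) simp_all
  have t1: "t \<ge> 1" unfolding t_def using assms(2) by simp
  have id: "(b*(q+1)+1)*(q+2)*t = ((b+1)*(q+1)+1)*t + t*b*(q+1)*(q+1)"
    by (simp add: algebra_simps)
  have "t*b \<ge> 1" using t1 assms(1) by (metis mult_le_mono nat_mult_1)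
  then have pos: "t*b*(q+1)*(q+1) \<ge> 1" by (metis le_add2 mult_le_mono nat_mult_1 add.commute)
  have l: "((b+1)*(p-1)+1)*p^(k-1) = ((b+1)*(q+1)+1)*t" by (simp add: q t_def)
  have r: "(b*(p-1)+1)*p^k = (b*(q+1)+1)*(q+2)*t" unfolding pk by (simp add: q algebra_simps)
  show ?thesis unfolding l r using id pos by linarith
qed

lemma coeff_mult_monom1: "coeff (q * monom 1 n) n = coeff (q::int poly) 0"
  by (subst mult.commute) (simp add: coeff_monom_mult)

lemma LB_alg:
  assumes "prime p" "b \<ge> 1"
  shows "\<not>(\<exists>A B. XX^((b*(p-1)+1)*p^k - 1) = [:int p:]^b * A + (TT^(p^Suc k) - 1) * B)"
proof
  assume "\<exists>A B. XX^((b*(p-1)+1)*p^k - 1) = [:int p:]^b * A + (TT^(p^Suc k) - 1) * B"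
  then obtain A B where AB: "XX^((b*(p-1)+1)*p^k - 1) = [:int p:]^b * A + (TT^(p^Suc k) - 1) * B"
    by blast
  define m where "m = p^k"
  define N where "N = (b*(p-1)+1)*p^k"
  define y where "y = TT^m - 1"
  define P where "P = [:int p:]"
  have p2: "p \<ge> 2" using assms(1) prime_ge_2_nat by blast
  have "p > 0" using p2 by simp
  then have m1: "m \<ge> 1" unfolding m_def by simp
  obtain h where h: "XX^m = y + P*XX*h" using F1[OF assms(1), of k] unfolding m_def y_def P_def by blast
  obtain Phi d where Phi: "y * Phi = (1+y)^p - 1" "Phi = y^(p-1) + P*(1 + y*d)" "coeff Phi 0 = 1"
    using Phi[OF assms(1) coeff_TT_1[OF m1]] unfolding y_def P_def by blast
  obtain s where s: "y = XX * s" using XX_dvd unfolding y_def by blast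
  obtain R where R: "(y + of_nat p * (XX*h))^(p-1) = y^(p-1) + of_nat (p-1) * of_nat p * y^(p-1-1) * (XX*h) + (of_nat p)^2*(XX*h)*R"
    using binom_p by blast
  define e where "e = of_nat (p-1) * y^(p-1-1) * h + P*h*R"
  have Xm1: "XX^(m*(p-1)) = y^(p-1) + P*XX*e"
  proof -
    have "XX^(m*(p-1)) = (y + of_nat p * (XX*h))^(p-1)" unfolding power_mult h P_def
      by (simp add: of_nat_intpoly algebra_simps)
    also have "\<dots> = y^(p-1) + P*XX*e" unfolding R e_def P_def
      by (simp add: of_nat_intpoly algebra_simps power2_eq_square)
    finally show ?thesis .
  qed
  define w where "w = s*d - e"
  define u where "u = 1 + XX*w"
  have R1: "XX^(m*(p-1)) = Phi - P*u"
    unfolding Xm1 Phi(2) u_def w_def s by (simp add: algebra_simps)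
  have YPhi: "TT^(p^Suc k) - 1 = y*Phi"
  proof -
    have "(1+y)^p = TT^(p^Suc k)" unfolding y_def m_def by (simp add: power_mult[symmetric] mult.commute)
    then show ?thesis using Phi(1) by simp
  qed
  obtain Z where Z: "(Phi + (-(P*u)))^b = (-(P*u))^b + Phi*Z" using sum_pow_mod by blast
  have Nexp: "N - 1 = b*(m*(p-1)) + (m-1)"
    unfolding N_def m_def using m1[unfolded m_def] by (simp add: algebra_simps)
  have XN: "XX^(N-1) = (-1)^b * P^b * u^b * XX^(m-1) + Phi*(Z*XX^(m-1))"
  proof -
    have "XX^(N-1) = (XX^(m*(p-1)))^b * XX^(m-1)" unfolding Nexp power_add
      by (simp add: power_mult[symmetric] mult.commute)
    also have "\<dots> = (Phi + (-(P*u)))^b * XX^(m-1)" unfolding R1 by simp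
    also have "\<dots> = (-1)^b * P^b * u^b * XX^(m-1) + Phi*(Z*XX^(m-1))"
      unfolding Z by (simp add: algebra_simps power_mult_distrib power_minus[of "P*u"])
    finally show ?thesis .
  qed
  have Pb: "P^b = [:int p ^ b:]" unfolding P_def const_poly_power ..
  have eq1: "[:int p ^ b:] * (A - (-1)^b * u^b * XX^(m-1)) = Phi * (Z*XX^(m-1) - y*B)"
  proof -
    have "P^b * A + y*Phi*B = (-1)^b * P^b * u^b * XX^(m-1) + Phi*(Z*XX^(m-1))"
      using AB XN YPhi unfolding N_def P_def by simp
    then show ?thesis unfolding Pb[symmetric] by (simp add: algebra_simps)
  qed
  have cPhi: "content Phi = 1" using Phi(3) by (simp add: content_coeff0)
  have pb0: "int p ^ b \<noteq> 0" using p2 by simp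
  have "Phi dvd (A - (-1)^b * u^b * XX^(m-1))"
    by (rule cancel_content[OF cPhi _ pb0]) (unfold eq1, rule dvd_triv_left)
  then obtain Q1 where Q1: "A - (-1)^b * u^b * XX^(m-1) = Phi * Q1" by blast
  obtain A' B' where AB': "XX^(N-1) = P^(b+1) * A' + y * B'"
  proof (cases k)
    case 0
    obtain q where q: "p = q + 2" using p2 by (metis le_add_diff_inverse2)
    have "b*(q+1) \<ge> 1" using assms(2) by simp
    then have "N - 1 \<ge> 1" unfolding N_def 0 q by simp
    then have "XX^(N-1) = XX * XX^(N-1-1)" by (simp add: power_eq_if)
    moreover have "y = XX" unfolding y_def m_def 0 by (simp add: TT_XX)
    ultimately have "XX^(N-1) = P^(b+1) * 0 + y * XX^(N-1-1)" by simp
    then show ?thesis using that by blast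
  next
    case (Suc k')
    obtain A'' B'' where AB'': "XX^(((b+1)*(p-1)+1)*p^k') = [:int p:]^(b+1) * A'' + (TT^(p^Suc k') - 1)*B''"
      using UBI[OF assms(1)] by blast
    have le: "((b+1)*(p-1)+1)*p^k' \<le> N - 1"
      using exp_ineq[OF assms(2) p2, of k] unfolding N_def Suc by simp
    define e0 where "e0 = ((b+1)*(p-1)+1)*p^k'"
    have ee: "e0 + (N - 1 - e0) = N - 1" using le unfolding e0_def by (rule le_add_diff_inverse)
    have "XX^(N-1) = XX^(((b+1)*(p-1)+1)*p^k') * XX^(N - 1 - ((b+1)*(p-1)+1)*p^k')"
      unfolding e0_def[symmetric] power_add[symmetric] ee ..
    also have "\<dots> = P^(b+1) * (A'' * XX^(N - 1 - ((b+1)*(p-1)+1)*p^k')) + y * (B'' * XX^(N - 1 - ((b+1)*(p-1)+1)*p^k'))"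
      unfolding AB'' y_def m_def Suc P_def by (simp add: algebra_simps)
    finally show ?thesis using that by blast
  qed
  have eq2: "[:int p ^ b:] * (A - P*A') = y * (B' - Phi*B)"
  proof -
    have "P^b * A + y*Phi*B = P^(b+1) * A' + y * B'"
      using AB AB' YPhi unfolding N_def P_def by simp
    then show ?thesis unfolding Pb[symmetric] by (simp add: algebra_simps)
  qed
  have cy: "content y = 1" unfolding y_def using coeff_TT_1[OF m1] by (simp add: content_coeff0)
  have "y dvd (A - P*A')"
    by (rule cancel_content[OF cy _ pb0]) (unfold eq2, rule dvd_triv_left)
  then obtain Q2 where Q2: "A - P*A' = y * Q2" by blast
  have Phi': "Phi = XX^m * XX^(m*(p-2)) + P*u"
  proof -
    obtain q where q: "p = q + 2" using p2 by (metis le_add_diff_inverse2)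
    have "m*(p-1) = m + m*(p-2)" by (simp add: q algebra_simps)
    then have "XX^(m*(p-1)) = XX^m * XX^(m*(p-2))" by (simp add: power_add)
    then show ?thesis using R1 by (simp add: algebra_simps)
  qed
  have y': "y = XX^m - P*XX*h" using h by simp
  define E0 where "E0 = A' - XX*h*Q2 - u*Q1"
  define F0 where "F0 = Q2 - XX^(m*(p-2))*Q1"
  have key: "(-1)^b * u^b * XX^(m-1) = P*E0 + XX^m * F0"
  proof -
    have "(-1)^b * u^b * XX^(m-1) = P*A' + y*Q2 - Phi*Q1" using Q1 Q2 by (simp add: algebra_simps)
    also have "\<dots> = P*E0 + XX^m * F0" unfolding y' Phi' E0_def F0_def by (simp add: algebra_simps)
    finally show ?thesis .
  qed
  have key2: "u^b * XX^(m-1) = P*((-1)^b*E0) + XX^m * ((-1)^b*F0)"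
  proof -
    have "((-1::int poly)^b)*((-1)^b) = 1" by (simp add: power_mult_distrib[symmetric])
    then have "u^b * XX^(m-1) = (-1)^b * ((-1)^b * u^b * XX^(m-1))" by (simp add: algebra_simps)
    also have "\<dots> = P*((-1)^b*E0) + XX^m * ((-1)^b*F0)" unfolding key by (simp add: algebra_simps)
    finally show ?thesis .
  qed
  define cw where "cw = pcompose w [:1,1:]"
  define cE where "cE = pcompose ((-1)^b*E0) [:1,1:]"
  define cF where "cF = pcompose ((-1)^b*F0) [:1,1:]"
  have key3: "(1 + [:0,1:]*cw)^b * monom 1 (m-1) = smult (int p) cE + monom 1 m * cF"
  proof -
    have "pcompose (u^b * XX^(m-1)) [:1,1:] = pcompose (P*((-1)^b*E0) + XX^m * ((-1)^b*F0)) [:1,1:]"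
      unfolding key2 ..
    then have "(1 + [:0,1:]*cw)^b * [:0,1:]^(m-1) = [:int p:] * cE + [:0,1:]^m * cF"
      unfolding u_def cw_def cE_def cF_def P_def
      by (simp only: pcompose_mult pcompose_add pcompose_power pc_XX pcompose_1 pcompose_const)
    then show ?thesis by (simp add: X_pow_monom)
  qed
  have "coeff ((1 + [:0,1:]*cw)^b * monom 1 (m-1)) (m-1) = 1"
  proof -
    have "coeff ((1 + [:0,1:]*cw)^b * monom 1 (m-1)) (m-1) = coeff ((1 + [:0,1:]*cw)^b) 0"
      by (rule coeff_mult_monom1)
    also have "\<dots> = poly ((1 + [:0,1:]*cw)^b) 0" by (simp add: poly_0_coeff_0)
    also have "\<dots> = 1" by simp
    finally show ?thesis .
  qed
  moreover have "coeff (smult (int p) cE + monom 1 m * cF) (m-1) = int p * coeff cE (m-1)"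
    using m1 by (simp add: coeff_monom_mult)
  ultimately have "int p * coeff cE (m-1) = 1" using key3 by simp
  then have "int p dvd 1" by (metis dvdI)
  then show False using p2 by simp
qed


lemma act_TT: "act TT f = shift 1 f"
  by (simp add: TT_def act_pCons0 act_const)

lemma act_TT_pow: "act (TT^n) f = shift (int n) f"
proof (induct n arbitrary: f)
  case 0 then show ?case by (simp add: shift_def)
next
  case (Suc n)
  then show ?case by (simp add: act_mult act_TT shift_def algebra_simps)
qed

lemma periodic_shift: "f \<in> periodic_maps M \<Longrightarrow> shift (int M) f = f"
  by (simp add: periodic_maps_def shift_def)

lemma periodic_mult:
  assumes "f \<in> periodic_maps M"
  shows "f (x + int M * j) = f x"
proof (induct j rule: int_induct[where k=0])
  case base then show ?case by simp
next
  case (step1 i)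
  have "f (x + int M * (i + 1)) = f ((x + int M * i) + int M)" by (simp add: algebra_simps)
  also have "\<dots> = f (x + int M * i)" using assms by (simp add: periodic_maps_def)
  finally show ?case using step1 by simp
next
  case (step2 i)
  have "f (x + int M * i) = f ((x + int M * (i - 1)) + int M)" by (simp add: algebra_simps)
  also have "\<dots> = f (x + int M * (i - 1))" using assms by (simp add: periodic_maps_def)
  finally show ?case using step2 by simp
qed

lemma act_periodic: "f \<in> periodic_maps M \<Longrightarrow> act q f \<in> periodic_maps M"
proof -
  assume f: "f \<in> periodic_maps M"
  have "shift (int M) (act q f) = act q f" using act_shift[of q "int M" f] periodic_shift[OF f] by simp
  then show ?thesis by (simp add: periodic_maps_def shift_def fun_eq_iff)
qed

lemma act_Y_periodic: "f \<in> periodic_maps M \<Longrightarrow> act ((TT^M - 1) * B) f = (\<lambda>_. 0)"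
proof -
  assume f: "f \<in> periodic_maps M"
  have g: "act B f \<in> periodic_maps M" by (rule act_periodic[OF f])
  show ?thesis unfolding act_mult act_diff act_TT_pow periodic_shift[OF g] by simp
qed

lemma act_I_vanish:
  assumes f: "f \<in> periodic_maps M" and ex: "\<forall>y::'b::ab_group_add. nsmul (p^b) y = 0"
  shows "act ([:int p:]^b * A + (TT^M - 1) * B) (f :: int \<Rightarrow> 'b) = (\<lambda>_. 0)"
proof -
  have "act ([:int p:]^b * A) f = (\<lambda>_. 0)"
    unfolding act_mult const_poly_power act_const using ex
    by (simp add: zsmul_nat[of "p^b", simplified])
  then show ?thesis by (simp add: act_add act_Y_periodic[OF f])
qed

lemma Delta_periodic:
  assumes f: "f \<in> periodic_maps M" and M: "M > 0"
  shows "Delta a f = act (TT^(nat (a mod int M)) - 1) f"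
proof -
  have "f (x + a) = f (x + (a mod int M))" for x
  proof -
    have "x + a = (x + a mod int M) + int M * (a div int M)" by simp
    then show ?thesis using periodic_mult[OF f, of "x + a mod int M" "a div int M"] by (simp add: add.commute)
  qed
  moreover have "int (nat (a mod int M)) = a mod int M" using M by simp
  ultimately show ?thesis
    by (simp add: act_diff act_TT_pow Delta_def shift_def fun_eq_iff)
qed

lemma Delta_periodic_maps: "f \<in> periodic_maps M \<Longrightarrow> Delta a f \<in> periodic_maps M"
  unfolding periodic_maps_def Delta_def by (simp, metis add.commute add.left_commute)

lemma foldr_Delta:
  assumes f: "f \<in> periodic_maps M" and M: "M > 0"
  shows "\<exists>Q. foldr Delta as f = act (Q * XX^(length as)) f"
proof (induct as)
  case Nil show ?case by (rule exI[of _ 1]) simp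
next
  case (Cons a as)
  then obtain Q where Q: "foldr Delta as f = act (Q * XX^(length as)) f" by blast
  obtain G where G: "TT^(nat (a mod int M)) - 1 = XX * G" using XX_dvd by blast
  have g: "act (Q * XX^(length as)) f \<in> periodic_maps M" by (rule act_periodic[OF f])
  have "foldr Delta (a # as) f = Delta a (act (Q * XX^(length as)) f)" using Q by simp
  also have "\<dots> = act (XX * G) (act (Q * XX^(length as)) f)" unfolding Delta_periodic[OF g M] G ..
  also have "\<dots> = act ((G * Q) * XX^(length (a # as))) f" by (simp add: act_mult[symmetric] algebra_simps)
  finally show ?case by blast
qed

lemma foldr_Delta_zero: "foldr Delta as (\<lambda>_. (0::'b::ab_group_add)) = (\<lambda>_. 0)"
  by (induct as) (simp_all add: Delta_def)

lemma foldr_Delta_1: "foldr Delta (replicate n 1) f = act (XX^n) f"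
proof (induct n)
  case 0 then show ?case by simp
next
  case (Suc n)
  have "foldr Delta (replicate (Suc n) 1) f = Delta 1 (foldr Delta (replicate n 1) f)" by simp
  also have "\<dots> = act XX (act (XX^n) f)" unfolding Suc XX_def act_x ..
  also have "\<dots> = act (XX^Suc n) f" by (simp only: act_mult[symmetric] power_Suc)
  finally show ?case .
qed

lemma act_sum:
  assumes "\<forall>i\<ge>n. coeff q i = 0"
  shows "act q f x = (\<Sum>i<n. zsmul (coeff q i) (f (x + int i)))"
  using assms
proof (induct q arbitrary: n f x)
  case 0 then show ?case by simp
next
  case (pCons c q)
  show ?case
  proof (cases n)
    case 0
    then have "pCons c q = 0" using pCons(3) by (intro poly_eqI) simp
    then show ?thesis using 0 by (metis act_0 lessThan_0 sum.empty)
  next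
    case (Suc n')
    have h: "\<forall>i\<ge>n'. coeff q i = 0"
      using pCons(3) Suc by (metis Suc_le_mono coeff_pCons_Suc)
    have "act (pCons c q) f x = zsmul c (f x) + act q (shift 1 f) x" by (simp add: act_pCons)
    also have "\<dots> = zsmul c (f x) + (\<Sum>i<n'. zsmul (coeff q i) (shift 1 f (x + int i)))"
      using pCons(2)[OF h] by simp
    also have "\<dots> = (\<Sum>i<n. zsmul (coeff (pCons c q) i) (f (x + int i)))"
      unfolding Suc sum.lessThan_Suc_shift by (simp add: shift_def algebra_simps)
    finally show ?thesis .
  qed
qed

lemma order_elem:
  assumes p: "prime p" and b: "b \<ge> 1" and ex: "has_exponent TYPE('b::ab_group_add) (p^b)"
  shows "\<exists>b0::'b. nsmul (p^(b-1)) b0 \<noteq> 0 \<and> (\<forall>c. zsmul c b0 = 0 \<longrightarrow> int p ^ b dvd c)"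
proof -
  have p2: "p \<ge> 2" using p prime_ge_2_nat by blast
  have all: "\<forall>x::'b. nsmul (p^b) x = 0" using ex by (simp add: has_exponent_def)
  have "p^(b-1) < p^b" using p2 b by (simp add: power_strict_increasing)
  note less = this
  have min: "\<forall>k. k > 0 \<and> (\<forall>x::'b. nsmul k x = 0) \<longrightarrow> p^b \<le> k" using ex by (simp add: has_exponent_def)
  have pos: "p^(b-1) > 0" using p2 by simp
  have "\<not> (\<forall>x::'b. nsmul (p^(b-1)) x = 0)"
  proof
    assume "\<forall>x::'b. nsmul (p^(b-1)) x = 0"
    then have "p^b \<le> p^(b-1)" using min pos by blast
    then show False using less by simp
  qed
  then obtain b0 :: 'b where b0: "nsmul (p^(b-1)) b0 \<noteq> 0" by blast
  have "\<forall>c. zsmul c b0 = 0 \<longrightarrow> int p ^ b dvd c"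
  proof (intro allI impI)
    fix c assume c: "zsmul c b0 = 0"
    show "int p ^ b dvd c"
    proof (rule ccontr)
      assume nd: "\<not> int p ^ b dvd c"
      define g where "g = gcd c (int p ^ b)"
      obtain u v where uv: "u * c + v * (int p ^ b) = g" using bezout_int[of c "int p ^ b"] unfolding g_def by blast
      have zb: "zsmul (int p ^ b) b0 = 0" using all zsmul_nat[of "p^b" b0] by simp
      have zg: "zsmul g b0 = 0"
        unfolding uv[symmetric] zsmul_add zsmul_mult c zb by simp
      have "g dvd int p ^ b" unfolding g_def by simp
      moreover have "g \<ge> 0" unfolding g_def by simp
      ultimately have "nat g dvd p ^ b"
        by (metis nat_dvd_iff nat_int of_nat_power)
      then obtain i where i: "i \<le> b" "nat g = p ^ i" using divides_primepow_nat[OF p] by blast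
      have gi: "g = int p ^ i" using i(2) \<open>g \<ge> 0\<close> by (metis int_nat_eq of_nat_power not_less nat_0_le)
      have "i \<noteq> b"
      proof
        assume "i = b"
        have "g dvd c" unfolding g_def by simp
        then show False using nd gi \<open>i = b\<close> by simp
      qed
      then have ib: "i \<le> b - 1" using i(1) by simp
      have ee: "b - 1 - i + i = b - 1" using ib by simp
      have "int (p^(b-1)) = int p ^ (b - 1 - i) * g" unfolding gi
        by (simp only: power_add[symmetric] ee of_nat_power)
      then have "zsmul (int (p^(b-1))) b0 = 0" by (simp add: zsmul_mult zg)
      then show False using b0 by (simp only: zsmul_nat)
    qed
  qed
  then show ?thesis using b0 by blast
qed

lemma Y_degree: "M \<ge> 1 \<Longrightarrow> degree (TT^M - 1) = M \<and> coeff (TT^M - 1) M = 1"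
proof -
  assume M: "M \<ge> 1"
  have e: "TT^M - 1 = monom 1 M + (-1)" unfolding TT_def X_pow_monom by simp
  have "degree (monom (1::int) M + (-1)) = M"
    using M by (subst degree_add_eq_left) (simp_all add: degree_monom_eq)
  moreover have "coeff (TT^M - 1) M = 1" unfolding e using M by simp
  ultimately show ?thesis unfolding e by simp
qed

lemma dvd_small:
  fixes i j M :: nat
  assumes "i < M" "j < M" "int M dvd (int i - int j)"
  shows "i = j"
proof (rule ccontr)
  assume ne: "i \<noteq> j"
  show False
  proof (cases "i < j")
    case True
    have "int M dvd (int j - int i)" using assms(3) by (metis dvd_minus_iff minus_diff_eq)
    then have "int M \<le> int j - int i" using True by (intro zdvd_imp_le) simp_all
    then show False using assms(2) by simp
  next
    case False
    then have "j < i" using ne by simp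
    then have "int M \<le> int i - int j" using assms(3) by (intro zdvd_imp_le) simp_all
    then show False using assms(1) by simp
  qed
qed

lemma reduce:
  assumes M: "M \<ge> 1" and b0: "\<forall>c. zsmul c b0 = 0 \<longrightarrow> int p ^ b dvd c"
    and z: "act q (\<lambda>x. if int M dvd x then b0 else 0) = (\<lambda>_. 0)"
  shows "\<exists>A B. q = [:int p:]^b * A + (TT^M - 1) * B"
proof -
  define Y where "Y = TT^M - 1"
  define f0 where "f0 = (\<lambda>x. if int M dvd x then b0 else 0)"
  have f0p: "f0 \<in> periodic_maps M" unfolding periodic_maps_def f0_def by simp
  have degY: "degree Y = M" "coeff Y M = 1" using Y_degree[OF M] unfolding Y_def by auto
  have Y0: "Y \<noteq> 0" using degY M by auto
  obtain Qd r where qr: "pseudo_divmod q Y = (Qd, r)" by (cases "pseudo_divmod q Y") auto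
  have "smult (coeff Y (degree Y) ^ (Suc (degree q) - degree Y)) q = Y * Qd + r"
    using pseudo_divmod(1)[OF Y0 qr] .
  then have q: "q = Y * Qd + r" using degY by simp
  have rdeg: "r = 0 \<or> degree r < M" using pseudo_divmod(2)[OF Y0 qr] degY by simp
  have rc: "\<forall>i\<ge>M. coeff r i = 0" using rdeg by (auto intro: coeff_eq_0)
  have ar: "act r f0 = (\<lambda>_. 0)"
  proof -
    have "r = q - Y * Qd" using q by simp
    then have "act r f0 = (\<lambda>x. act q f0 x - act (Y * Qd) f0 x)" by (simp add: act_diff)
    also have "\<dots> = (\<lambda>_. 0)" using z act_Y_periodic[OF f0p, of Qd] unfolding f0_def Y_def by simp
    finally show ?thesis .
  qed
  have "int p ^ b dvd coeff r j" for j
  proof (cases "j < M")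
    case False then show ?thesis using rc by simp
  next
    case True
    have "act r f0 (- int j) = (\<Sum>i<M. zsmul (coeff r i) (f0 (- int j + int i)))"
      by (rule act_sum[OF rc])
    also have "\<dots> = (\<Sum>i<M. if i = j then zsmul (coeff r i) b0 else 0)"
    proof (rule sum.cong)
      fix i assume i: "i \<in> {..<M}"
      have "int M dvd (- int j + int i) \<longleftrightarrow> i = j"
        using dvd_small[of i M j] i True by auto
      then show "zsmul (coeff r i) (f0 (- int j + int i)) = (if i = j then zsmul (coeff r i) b0 else 0)"
        unfolding f0_def by simp
    qed simp
    also have "\<dots> = zsmul (coeff r j) b0" using True by simp
    finally have "zsmul (coeff r j) b0 = 0" using ar by (metis)
    then show ?thesis using b0 by blast
  qed
  then have "[:int p ^ b:] dvd r" by (simp add: const_poly_dvd_iff)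
  then obtain A where A: "r = [:int p ^ b:] * A" by blast
  have "q = [:int p:]^b * A + (TT^M - 1) * Qd" unfolding q A Y_def const_poly_power by simp
  then show ?thesis by blast
qed

theorem theorem4:
  fixes p \<alpha> \<beta> :: nat
  assumes "prime p" and "\<alpha> \<ge> 1" and "\<beta> \<ge> 1"
    and "has_exponent TYPE('b::ab_group_add) (p ^ \<beta>)"
  shows "delta TYPE('b) (p ^ \<alpha>) = Some (enat ((\<beta> * (p - 1) + 1) * p ^ (\<alpha> - 1) - 1))"
proof -
  define k where "k = \<alpha> - 1"
  define M where "M = p^\<alpha>"
  define N where "N = (\<beta> * (p - 1) + 1) * p ^ k"
  have p2: "p \<ge> 2" using assms(1) prime_ge_2_nat by blast
  have Mk: "p^Suc k = M" unfolding M_def k_def using assms(2) by simp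
  have M1: "M \<ge> 1" unfolding M_def using p2 by simp
  have M0: "M > 0" using M1 by simp
  have "p^k \<ge> 1" using p2 by simp
  then have N1: "N \<ge> 1" unfolding N_def by (metis le_add2 mult_le_mono nat_mult_1 add.commute)
  have all: "\<forall>y::'b. nsmul (p^\<beta>) y = 0" using assms(4) by (simp add: has_exponent_def)
  have van: "diffs_vanish (N - 1) f" if f: "f \<in> periodic_maps M" for f :: "int \<Rightarrow> 'b"
    unfolding diffs_vanish_def
  proof (intro allI impI)
    fix as :: "int list" assume len: "length as = Suc (N - 1)"
    obtain Q where Q: "foldr Delta as f = act (Q * XX^(length as)) f" using foldr_Delta[OF f M0] by blast
    obtain A B where AB: "XX^N = [:int p:]^\<beta> * A + (TT^M - 1) * B"
      using UBI[OF assms(1), of \<beta> k] unfolding N_def Mk by blast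
    have "length as = N" using len N1 by simp
    then have "Q * XX^(length as) = Q * ([:int p:]^\<beta> * A + (TT^M - 1) * B)"
      using AB by simp
    also have "\<dots> = [:int p:]^\<beta> * (Q*A) + (TT^M - 1) * (Q*B)" by (simp only: algebra_simps)
    finally have "Q * XX^(length as) = [:int p:]^\<beta> * (Q*A) + (TT^M - 1) * (Q*B)" .
    then show "foldr Delta as f = (\<lambda>_. 0)" using Q act_I_vanish[OF f all] by simp
  qed
  have le: "fdeg f \<le> Some (enat (N - 1))" if f: "f \<in> periodic_maps M" for f :: "int \<Rightarrow> 'b"
  proof (cases "f = (\<lambda>_. 0)")
    case True then show ?thesis by (simp add: fdeg_def)
  next
    case False
    have "(LEAST n. diffs_vanish n f) \<le> N - 1" using van[OF f] by (rule Least_le)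
    then show ?thesis using False van[OF f] by (auto simp: fdeg_def)
  qed
  obtain b0 :: 'b where b0: "nsmul (p^(\<beta>-1)) b0 \<noteq> 0" "\<forall>c. zsmul c b0 = 0 \<longrightarrow> int p ^ \<beta> dvd c"
    using order_elem[OF assms(1) assms(3) assms(4)] by blast
  define f0 where "f0 = (\<lambda>x::int. if int M dvd x then b0 else 0)"
  have f0p: "f0 \<in> periodic_maps M" unfolding periodic_maps_def f0_def by simp
  have nonvan: "foldr Delta (replicate (N-1) 1) f0 \<noteq> (\<lambda>_. 0)"
  proof
    assume "foldr Delta (replicate (N-1) 1) f0 = (\<lambda>_. 0)"
    then have "act (XX^(N-1)) f0 = (\<lambda>_. 0)" by (simp only: foldr_Delta_1)
    then have "\<exists>A B. XX^(N-1) = [:int p:]^\<beta> * A + (TT^M - 1) * B"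
      using reduce[OF M1 b0(2)] unfolding f0_def by blast
    then show False using LB_alg[OF assms(1) assms(3), of k] unfolding N_def Mk by blast
  qed
  have f0nz: "f0 \<noteq> (\<lambda>_. 0)"
  proof
    assume "f0 = (\<lambda>_. 0)"
    then have "foldr Delta (replicate (N-1) 1) f0 = (\<lambda>_. 0)" by (simp only: foldr_Delta_zero)
    then show False using nonvan by contradiction
  qed
  have notvan: "\<not> diffs_vanish n f0" if n: "n < N - 1" for n
  proof
    assume dv: "diffs_vanish n f0"
    have "replicate (N-1) (1::int) = replicate (N - 1 - Suc n) 1 @ replicate (Suc n) 1"
    proof -
      have "N - 1 = (N - 1 - Suc n) + Suc n" using n by simp
      then show ?thesis by (metis replicate_add)
    qed
    then have "foldr Delta (replicate (N-1) 1) f0 = foldr Delta (replicate (N - 1 - Suc n) 1) (foldr Delta (replicate (Suc n) 1) f0)"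
      by simp
    also have "foldr Delta (replicate (Suc n) 1) f0 = (\<lambda>_. 0)"
      using dv unfolding diffs_vanish_def by (metis length_replicate)
    also have "foldr Delta (replicate (N - 1 - Suc n) 1) (\<lambda>_. 0) = (\<lambda>_. (0::'b))"
      by (rule foldr_Delta_zero)
    finally show False using nonvan by contradiction
  qed
  have least: "(LEAST n. diffs_vanish n f0) = N - 1"
  proof (rule Least_equality)
    show "diffs_vanish (N - 1) f0" using van[OF f0p] .
    show "N - 1 \<le> m" if "diffs_vanish m f0" for m using notvan that by (meson not_le)
  qed
  have f0deg: "fdeg f0 = Some (enat (N - 1))"
    using f0nz van[OF f0p] least by (auto simp: fdeg_def)
  have "delta TYPE('b) M = Some (enat (N - 1))"
    unfolding delta_def
  proof (rule antisym)
    show "(SUP f\<in>(periodic_maps M :: (int \<Rightarrow> 'b) set). fdeg f) \<le> Some (enat (N - 1))"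
      by (rule SUP_least) (rule le)
    show "Some (enat (N - 1)) \<le> (SUP f\<in>(periodic_maps M :: (int \<Rightarrow> 'b) set). fdeg f)"
      unfolding f0deg[symmetric] by (rule SUP_upper[OF f0p])
  qed
  then show ?thesis unfolding M_def N_def k_def .
qed

end
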